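(* Let $\mathcal{Z}=\mathbb{Z}^d$, $p\ge1$, $q\ge0$, and let $(a_{\ell;\mathbf{j}})_{\ell\in\mathcal{Z},\mathbf{j}\in\mathcal{Z}^p}$ be coefficients such that $a_{\ell;\mathbf{j}}=0$ whenever $\max_{1\le n\le d}|\mathcal{M}(\ell,\mathbf{j})^n|>q$, where $\mathcal{M}(\ell,\mathbf{j})=\ell-j_1-\cdots-j_p\in\mathbb{Z}^d$. There is a constant $C$ depending only on $d,q,p$ such that for all $M\in\mathbb{N}\cup\{+\infty\}$ and all integers $N\ge2$: (i) $\#\{(\ell,j_1,\dots,j_p)\in\mathcal{K}_M^{p+1}: \|j_1\|\cdots\|j_p\|\le N,\ a_{\ell;\mathbf{j}}\ne0\}\le C N^d(\log N)^{p-1}$; (ii) $\#\{(\ell,j_1,\dots,j_p)\in(\mathcal{K}^*_M)^{p+1}: |j_1|\cdots|j_p|\le N,\ a_{\ell;\mathbf{j}}\ne0\}\le C N(\log N)^{dp-1}$.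
   Context: For $j=(j^1,\dots,j^d)\in\mathbb{Z}^d$: $\|j\|=\max(1,|j^1|,\dots,|j^d|)$ and the sparse size $|j|=\prod_{n=1}^d(1+|j^n|)$. For $M\in\mathbb{N}\cup\{+\infty\}$, $\mathcal{K}_M=\{j:\|j\|\le M\}$ and $\mathcal{K}^*_M=\{j:|j|\le M\}$. $\#F$ is the cardinality of $F$. *)

theory Defs
  imports "HOL-Analysis.Analysis" "HOL-Library.Extended_Nat"
begin

text \<open>Lattice points of Z^d are modelled as int ^ 'd, with d = CARD('d).\<close>

definition lnorm :: "int ^ 'd \<Rightarrow> int" where
  "lnorm j = max 1 (Max (range (\<lambda>n. \<bar>j $ n\<bar>)))"

definition ssize :: "int ^ 'd \<Rightarrow> int" where
  "ssize j = (\<Prod>n\<in>UNIV. 1 + \<bar>j $ n\<bar>)"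

definition KM :: "enat \<Rightarrow> (int ^ 'd) set" where
  "KM M = {j. enat (nat (lnorm j)) \<le> M}"

definition KMstar :: "enat \<Rightarrow> (int ^ 'd) set" where
  "KMstar M = {j. enat (nat (ssize j)) \<le> M}"

definition momentum :: "int ^ 'd \<Rightarrow> (int ^ 'd) list \<Rightarrow> int ^ 'd" where
  "momentum l js = l - sum_list js"

end

theory Submission
  imports Defs
begin


definition LS :: "('a \<Rightarrow> nat) \<Rightarrow> nat \<Rightarrow> real \<Rightarrow> 'a list set" where
  "LS w r x = {xs. length xs = r \<and> real (prod_list (map w xs)) \<le> x}"

lemma prod_list_ge_elem:
  assumes "\<forall>y. w y \<ge> (1::nat)" "y \<in> set xs"
  shows "w y \<le> prod_list (map w xs)"
  using assms(2)
proof (induction xs)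
  case (Cons a xs)
  have p1: "prod_list (map w xs) \<ge> 1" using assms(1)
    by (induction xs) (auto simp: one_le_mult_iff)
  have wa: "w a \<ge> 1" using assms(1) by blast
  show ?case
  proof (cases "y = a")
    case True thus ?thesis using p1 by simp
  next
    case False
    hence "w y \<le> prod_list (map w xs)" using Cons by simp
    also have "\<dots> \<le> w a * prod_list (map w xs)" using wa by simp
    finally show ?thesis by simp
  qed
qed simp

lemma LS_finite:
  assumes w1: "\<forall>y. w y \<ge> (1::nat)" and fin: "\<forall>n. finite {y. w y \<le> n}"
  shows "finite (LS w r x)"
proof -
  have "LS w r x \<subseteq> {xs. set xs \<subseteq> {y. w y \<le> nat \<lfloor>x\<rfloor>} \<and> length xs = r}"
  proof
    fix xs assume "xs \<in> LS w r x"
    hence h: "length xs = r" "real (prod_list (map w xs)) \<le> x" by (auto simp: LS_def)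
    { fix y assume "y \<in> set xs"
      hence "w y \<le> prod_list (map w xs)" using prod_list_ge_elem w1 by metis
      hence "real (w y) \<le> x" using h by linarith
      hence "w y \<le> nat \<lfloor>x\<rfloor>" by linarith }
    thus "xs \<in> {xs. set xs \<subseteq> {y. w y \<le> nat \<lfloor>x\<rfloor>} \<and> length xs = r}" using h by auto
  qed
  thus ?thesis using finite_lists_length_eq fin finite_subset by blast
qed

lemma LS_Suc:
  assumes w1: "\<forall>y. w y \<ge> (1::nat)"
  shows "LS w (Suc r) x \<subseteq> (\<lambda>(y,ys). y # ys) ` (SIGMA y:{y. real (w y) \<le> x}. LS w r (x / w y))"
proof
  fix xs assume "xs \<in> LS w (Suc r) x"
  then obtain y ys where xs: "xs = y # ys" "length ys = r" "real (w y) * real (prod_list (map w ys)) \<le> x"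
    by (auto simp: LS_def length_Suc_conv)
  have "w y \<ge> 1" "prod_list (map w ys) \<ge> 1" using w1
    by (auto simp: one_le_mult_iff) (induction ys, auto simp: one_le_mult_iff)
  hence "real (w y) \<le> x" using xs(3)
    by (metis dual_order.trans mult.right_neutral mult_left_mono of_nat_0_le_iff of_nat_1 of_nat_le_iff)
  moreover have "real (prod_list (map w ys)) \<le> x / w y" using xs(3) \<open>w y \<ge> 1\<close>
    by (subst pos_le_divide_eq) (auto simp: mult.commute)
  ultimately show "xs \<in> (\<lambda>(y,ys). y # ys) ` (SIGMA y:{y. real (w y) \<le> x}. LS w r (x / w y))"
    using xs by (auto simp: LS_def)
qed

lemma LS_bound:
  fixes B :: real and e :: nat
  assumes w1: "\<forall>y. w y \<ge> (1::nat)" and fin: "\<forall>n. finite {y. w y \<le> n}"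
    and B0: "B \<ge> 0"
    and hB: "\<forall>x\<ge>1. real (card {y. real (w y) \<le> x}) \<le> B * x ^ e"
    and hS: "\<forall>x\<ge>1. (\<Sum>y\<in>{y. real (w y) \<le> x}. 1 / real (w y) ^ e) \<le> B * (1 + ln x)"
  shows "r \<ge> 1 \<Longrightarrow> x \<ge> 1 \<Longrightarrow> real (card (LS w r x)) \<le> B ^ r * x ^ e * (1 + ln x) ^ (r - 1)"
proof (induction r arbitrary: x rule: nat_induct_at_least)
  case base
  have "LS w 1 x = (\<lambda>y. [y]) ` {y. real (w y) \<le> x}"
    by (auto simp: LS_def length_Suc_conv)
  hence "card (LS w 1 x) \<le> card {y. real (w y) \<le> x}" by (simp add: card_image inj_on_def)
  hence "real (card (LS w 1 x)) \<le> real (card {y. real (w y) \<le> x})" by linarith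
  also have "\<dots> \<le> B * x ^ e" using hB base by blast
  finally show ?case by simp
next
  case (Suc r)
  have finY: "finite {y. real (w y) \<le> x}"
    by (rule finite_subset[OF _ fin[rule_format, of "nat \<lfloor>x\<rfloor>"]]) (auto, linarith)
  have "card (LS w (Suc r) x) \<le> card ((\<lambda>(y,ys). y # ys) ` (SIGMA y:{y. real (w y) \<le> x}. LS w r (x / w y)))"
    by (rule card_mono[OF _ LS_Suc[OF w1]]) (intro finite_imageI finite_SigmaI finY LS_finite[OF w1 fin])
  also have "\<dots> \<le> card (SIGMA y:{y. real (w y) \<le> x}. LS w r (x / w y))" by (rule card_image_le)
    (intro finite_imageI finite_SigmaI finY LS_finite[OF w1 fin])
  also have "\<dots> = (\<Sum>y\<in>{y. real (w y) \<le> x}. card (LS w r (x / w y)))"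
    using finY LS_finite[OF w1 fin] by simp
  finally have "real (card (LS w (Suc r) x)) \<le> (\<Sum>y\<in>{y. real (w y) \<le> x}. real (card (LS w r (x / w y))))"
    by (metis of_nat_le_iff of_nat_sum)
  also have "\<dots> \<le> (\<Sum>y\<in>{y. real (w y) \<le> x}. (B ^ r * x ^ e * (1 + ln x) ^ (r - 1)) * (1 / real (w y) ^ e))"
  proof (rule sum_mono)
    fix y assume y: "y \<in> {y. real (w y) \<le> x}"
    have wy: "real (w y) \<ge> 1" using w1 by (metis of_nat_1 of_nat_le_iff)
    have x1: "x / w y \<ge> 1" using y wy by simp
    have "real (card (LS w r (x / w y))) \<le> B ^ r * (x / w y) ^ e * (1 + ln (x / w y)) ^ (r - 1)"
      using Suc.IH x1 by blast
    also have "\<dots> \<le> B ^ r * (x / w y) ^ e * (1 + ln x) ^ (r - 1)"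
    proof -
      have "ln (x / w y) \<le> ln x" using wy Suc.prems by (simp add: ln_div)
      moreover have "0 \<le> ln (x / w y)" using x1 by simp
      ultimately have "(1 + ln (x / w y)) ^ (r - 1) \<le> (1 + ln x) ^ (r - 1)"
        by (intro power_mono) auto
      thus ?thesis using B0 x1 by (intro mult_left_mono) auto
    qed
    also have "\<dots> = (B ^ r * x ^ e * (1 + ln x) ^ (r - 1)) * (1 / real (w y) ^ e)"
      by (simp add: power_divide)
    finally show "real (card (LS w r (x / w y))) \<le> (B ^ r * x ^ e * (1 + ln x) ^ (r - 1)) * (1 / real (w y) ^ e)" .
  qed
  also have "\<dots> = (B ^ r * x ^ e * (1 + ln x) ^ (r - 1)) * (\<Sum>y\<in>{y. real (w y) \<le> x}. 1 / real (w y) ^ e)"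
    by (simp add: sum_distrib_left)
  also have "\<dots> \<le> (B ^ r * x ^ e * (1 + ln x) ^ (r - 1)) * (B * (1 + ln x))"
    using hS Suc.prems B0 by (intro mult_left_mono) auto
  also have "\<dots> = B ^ Suc r * x ^ e * (1 + ln x) ^ (Suc r - 1)"
    using Suc.hyps by (cases r) (auto simp: algebra_simps)
  finally show ?case .
qed



lemma card_box:
  fixes k :: nat
  shows "card {j::int^'d. \<forall>n. \<bar>j $ n\<bar> \<le> int k} = (2*k+1) ^ CARD('d)"
proof -
  have "bij_betw vec_nth {j::int^'d. \<forall>n. \<bar>j $ n\<bar> \<le> int k} (PiE UNIV (\<lambda>_. {-int k..int k}))"
  proof (rule bij_betwI[where g = vec_lambda])
    show "vec_nth \<in> {j::int^'d. \<forall>n. \<bar>j $ n\<bar> \<le> int k} \<rightarrow> PiE UNIV (\<lambda>_. {-int k..int k})"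
      by (auto simp: abs_le_iff) (metis minus_le_iff)
    show "vec_lambda \<in> PiE UNIV (\<lambda>_. {-int k..int k}) \<rightarrow> {j::int^'d. \<forall>n. \<bar>j $ n\<bar> \<le> int k}"
      by (auto simp: PiE_def Pi_def abs_le_iff) (metis minus_le_iff)
  qed auto
  hence "card {j::int^'d. \<forall>n. \<bar>j $ n\<bar> \<le> int k} = card (PiE (UNIV::'d set) (\<lambda>_. {-int k..int k}))"
    by (rule bij_betw_same_card)
  also have "\<dots> = (2*k+1) ^ CARD('d)" by (simp add: card_PiE nat_add_distrib nat_mult_distrib)
  finally show ?thesis .
qed

lemma harm_le_ln: "n \<ge> 1 \<Longrightarrow> (harm n :: real) \<le> 1 + ln (real n)"
proof (induction n rule: nat_induct_at_least)
  case base thus ?case by (simp add: harm_def)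
next
  case (Suc n)
  have "1 / real (Suc n) \<le> ln (real (Suc n)) - ln (real n)"
  proof -
    have "ln (real n / real (Suc n)) \<le> real n / real (Suc n) - 1"
      using Suc.hyps by (intro ln_le_minus_one) auto
    moreover have "real n / real (Suc n) - 1 = - (1 / real (Suc n))" by (simp add: field_simps)
    moreover have "ln (real n / real (Suc n)) = ln (real n) - ln (real (Suc n))"
      using Suc.hyps by (simp add: ln_div)
    ultimately show ?thesis by linarith
  qed
  thus ?case using Suc.IH by (simp add: harm_Suc inverse_eq_divide)
qed

lemma pow_diff_le:
  fixes a b :: real
  assumes "0 \<le> b" "b \<le> a"
  shows "a ^ n - b ^ n \<le> real n * (a - b) * a ^ (n - 1)"
proof (induction n)
  case (Suc n)
  have "a ^ Suc n - b ^ Suc n = a * (a ^ n - b ^ n) + b ^ n * (a - b)" by (simp add: algebra_simps)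
  also have "\<dots> \<le> a * (real n * (a - b) * a ^ (n - 1)) + a ^ n * (a - b)"
    using assms Suc.IH by (intro add_mono mult_left_mono mult_right_mono power_mono) auto
  also have "\<dots> = real (Suc n) * (a - b) * a ^ (Suc n - 1)"
    by (cases n) (auto simp: algebra_simps)
  finally show ?case .
qed simp



lemma lnorm_ge1: "lnorm j \<ge> 1" by (simp add: lnorm_def)

lemma lnorm_le_iff: "k \<ge> 1 \<Longrightarrow> lnorm (j::int^'d) \<le> k \<longleftrightarrow> (\<forall>n. \<bar>j $ n\<bar> \<le> k)"
  by (auto simp: lnorm_def Max_le_iff)

definition bx :: "nat \<Rightarrow> (int^'d) set" where
  "bx k = {j. \<forall>n. \<bar>j $ n\<bar> \<le> int k}"

lemma card_bx': "card (bx k :: (int^'d) set) = (2*k+1) ^ CARD('d)"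
  unfolding bx_def by (rule card_box)

lemma finite_bx: "finite (bx k :: (int^'d) set)"
proof -
  have "card (bx k :: (int^'d) set) > 0" unfolding card_bx' by simp
  thus ?thesis by (rule card_ge_0_finite)
qed

lemma bx_mono: "k \<le> l \<Longrightarrow> bx k \<subseteq> bx l"
  by (auto simp: bx_def) (meson dual_order.trans of_nat_le_iff)

lemma bx_lnorm: "k \<ge> 1 \<Longrightarrow> bx k = {j. lnorm j \<le> int k}"
  using lnorm_le_iff[of "int k"] by (auto simp: bx_def)

lemma sum_bx_bound:
  fixes K :: nat
  assumes "K \<ge> 1"
  shows "(\<Sum>j\<in>bx K. 1 / real_of_int (lnorm (j::int^'d)) ^ CARD('d))
          \<le> (2 * real CARD('d) * 3 ^ CARD('d)) * harm K"
  using assms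
proof (induction K rule: nat_induct_at_least)
  case base
  have "\<forall>j\<in>bx 1. lnorm (j::int^'d) = 1" proof
    fix j :: "int^'d" assume "j \<in> bx 1"
    hence "lnorm j \<le> 1" using bx_lnorm[of 1] by auto
    thus "lnorm j = 1" using lnorm_ge1[of j] by simp
  qed
  hence "(\<Sum>j\<in>bx 1. 1 / real_of_int (lnorm (j::int^'d)) ^ CARD('d)) = real (card (bx 1 :: (int^'d) set))"
    by simp
  also have "\<dots> = 3 ^ CARD('d)" by (simp add: card_bx')
  also have "\<dots> \<le> (2 * real CARD('d) * 3 ^ CARD('d)) * harm 1"
  proof -
    have "(1::real) \<le> 2 * real CARD('d)"
      using zero_less_card_finite[where 'a='d] by linarith
    thus ?thesis by (simp add: harm_def)
  qed
  finally show ?case .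
next
  case (Suc K)
  let ?d = "CARD('d)"
  define D where "D = bx (Suc K) - (bx K :: (int^'d) set)"
  have sub: "bx K \<subseteq> (bx (Suc K) :: (int^'d) set)" by (rule bx_mono) simp
  have split: "bx (Suc K) = bx K \<union> D" "bx K \<inter> D = {}" using sub by (auto simp: D_def)
  have finD: "finite D" using finite_bx[where 'd='d] by (simp add: D_def)
  have lnD: "\<forall>j\<in>D. lnorm j = int (Suc K)"
  proof
    fix j assume "j \<in> D"
    hence "lnorm j \<le> int (Suc K)" "\<not> lnorm j \<le> int K"
      using bx_lnorm[of "Suc K"] bx_lnorm[of K] Suc.hyps by (auto simp: D_def)
    thus "lnorm j = int (Suc K)" by simp
  qed
  have cardD: "real (card D) = real (2*K+3) ^ ?d - real (2*K+1) ^ ?d"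
  proof -
    have "card D = card (bx (Suc K) :: (int^'d) set) - card (bx K :: (int^'d) set)"
      unfolding D_def using sub finite_bx[where 'd='d] by (simp add: card_Diff_subset)
    moreover have "card (bx K :: (int^'d) set) \<le> card (bx (Suc K) :: (int^'d) set)"
      using sub finite_bx[where 'd='d] by (intro card_mono) auto
    ultimately show ?thesis by (simp add: card_bx' of_nat_diff add.commute)
  qed
  also have "\<dots> \<le> real ?d * 2 * real (2*K+3) ^ (?d - 1)"
    using pow_diff_le[of "real (2*K+1)" "real (2*K+3)" ?d] by simp
  also have "\<dots> \<le> real ?d * 2 * (3 * real (Suc K)) ^ (?d - 1)"
    by (intro mult_left_mono power_mono) auto
  also have "\<dots> = 2 * real ?d * 3 ^ (?d - 1) * real (Suc K) ^ (?d - 1)"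
    by (simp only: power_mult_distrib mult_ac)
  finally have cardD': "real (card D) \<le> 2 * real ?d * 3 ^ (?d - 1) * real (Suc K) ^ (?d - 1)" .
  have "(\<Sum>j\<in>D. 1 / real_of_int (lnorm j) ^ ?d) = real (card D) / real (Suc K) ^ ?d"
    using lnD by simp
  also have "\<dots> \<le> 2 * real ?d * 3 ^ (?d - 1) * real (Suc K) ^ (?d - 1) / real (Suc K) ^ ?d"
    using cardD' by (intro divide_right_mono) auto
  also have "\<dots> = 2 * real ?d * 3 ^ (?d - 1) / real (Suc K)"
  proof -
    have "real (Suc K) ^ ?d = real (Suc K) ^ (?d - 1) * real (Suc K)"
      by (metis Suc_diff_1 power_Suc2 zero_less_card_finite)
    thus ?thesis by simp
  qed
  also have "\<dots> \<le> (2 * real ?d * 3 ^ ?d) * inverse (real (Suc K))"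
  proof -
    have "(3::real) ^ (?d - 1) \<le> 3 ^ ?d" by (intro power_increasing) auto
    thus ?thesis by (simp add: divide_inverse)
  qed
  finally have hD: "(\<Sum>j\<in>D. 1 / real_of_int (lnorm j) ^ ?d) \<le> (2 * real ?d * 3 ^ ?d) * inverse (real (Suc K))" .
  have "(\<Sum>j\<in>bx (Suc K). 1 / real_of_int (lnorm (j::int^'d)) ^ ?d)
      = (\<Sum>j\<in>bx K. 1 / real_of_int (lnorm (j::int^'d)) ^ ?d) + (\<Sum>j\<in>D. 1 / real_of_int (lnorm j) ^ ?d)"
    unfolding split(1) using finD split(2) finite_bx[of K, where 'd='d] by (simp add: sum.union_disjoint)
  also have "\<dots> \<le> (2 * real ?d * 3 ^ ?d) * harm K + (2 * real ?d * 3 ^ ?d) * inverse (real (Suc K))"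
    using Suc.IH hD by linarith
  also have "\<dots> = (2 * real ?d * 3 ^ ?d) * harm (Suc K)" by (simp add: harm_Suc algebra_simps)
  finally show ?case .
qed



lemma int_prod_list_nat:
  assumes "\<forall>x. f x \<ge> (0::int)"
  shows "int (prod_list (map (\<lambda>x. nat (f x)) xs)) = prod_list (map f xs)"
  using assms by (induction xs) auto

lemma J1_bound:
  fixes N :: nat and p :: nat
  assumes "p \<ge> 1" "N \<ge> 1"
  shows "finite {js :: (int^'d) list. length js = p \<and> prod_list (map lnorm js) \<le> int N}
    \<and> real (card {js :: (int^'d) list. length js = p \<and> prod_list (map lnorm js) \<le> int N})
      \<le> (2 * real CARD('d) * 3 ^ CARD('d)) ^ p * real N ^ CARD('d) * (1 + ln (real N)) ^ (p - 1)"
proof -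
  let ?d = "CARD('d)"
  let ?B = "2 * real CARD('d) * 3 ^ CARD('d)"
  let ?w = "\<lambda>j::int^'d. nat (lnorm j)"
  have w1: "\<forall>y. ?w y \<ge> 1"
  proof
    fix y :: "int^'d" show "?w y \<ge> 1" using lnorm_ge1[of y] by linarith
  qed
  have rw: "real (?w j) = real_of_int (lnorm j)" for j using lnorm_ge1[of j] by simp
  have fin: "\<forall>n. finite {y. ?w y \<le> n}"
  proof
    fix n
    have "{y. ?w y \<le> n} \<subseteq> bx n"
    proof
      fix y assume "y \<in> {y. ?w y \<le> n}"
      hence "lnorm y \<le> int n" by simp
      moreover have "int n \<ge> 1" using lnorm_ge1[of y] \<open>lnorm y \<le> int n\<close> by linarith
      ultimately show "y \<in> bx n" using bx_lnorm[of n] by auto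
    qed
    thus "finite {y. ?w y \<le> n}" using finite_bx[of n, where 'd='d] finite_subset by blast
  qed
  have B1: "(3::real) ^ ?d \<le> ?B"
  proof -
    have "(1::real) \<le> 2 * real ?d" using zero_less_card_finite[where 'a='d] by linarith
    thus ?thesis by simp
  qed
  have Bset: "{y. real (?w y) \<le> x} = bx (nat \<lfloor>x\<rfloor>)" if "x \<ge> 1" for x
  proof -
    have "nat \<lfloor>x\<rfloor> \<ge> 1" using that by linarith
    hence "bx (nat \<lfloor>x\<rfloor>) = {j::int^'d. lnorm j \<le> int (nat \<lfloor>x\<rfloor>)}" by (rule bx_lnorm)
    also have "\<dots> = {y. real (?w y) \<le> x}" using that by (auto simp: rw) linarith+
    finally show ?thesis by simp
  qed
  have hB: "\<forall>x\<ge>1. real (card {y. real (?w y) \<le> x}) \<le> ?B * x ^ ?d"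
  proof (intro allI impI)
    fix x :: real assume x: "x \<ge> 1"
    have "real (card {y. real (?w y) \<le> x}) = real (2 * nat \<lfloor>x\<rfloor> + 1) ^ ?d"
      using Bset[OF x] card_bx'[of "nat \<lfloor>x\<rfloor>", where 'd='d] by simp
    also have "\<dots> \<le> (3 * x) ^ ?d" using x by (intro power_mono) linarith+
    also have "\<dots> = 3 ^ ?d * x ^ ?d" by (simp add: power_mult_distrib)
    also have "\<dots> \<le> ?B * x ^ ?d" using B1 x by (intro mult_right_mono) auto
    finally show "real (card {y. real (?w y) \<le> x}) \<le> ?B * x ^ ?d" .
  qed
  have hS: "\<forall>x\<ge>1. (\<Sum>y\<in>{y. real (?w y) \<le> x}. 1 / real (?w y) ^ ?d) \<le> ?B * (1 + ln x)"
  proof (intro allI impI)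
    fix x :: real assume x: "x \<ge> 1"
    have K: "nat \<lfloor>x\<rfloor> \<ge> 1" using x by linarith
    have "(\<Sum>y\<in>{y. real (?w y) \<le> x}. 1 / real (?w y) ^ ?d)
        = (\<Sum>j\<in>bx (nat \<lfloor>x\<rfloor>). 1 / real_of_int (lnorm (j::int^'d)) ^ ?d)"
      by (subst Bset[OF x]) (simp add: rw)
    also have "\<dots> \<le> ?B * harm (nat \<lfloor>x\<rfloor>)" by (rule sum_bx_bound[OF K])
    also have "\<dots> \<le> ?B * (1 + ln x)"
    proof (intro mult_left_mono)
      have "harm (nat \<lfloor>x\<rfloor>) \<le> 1 + ln (real (nat \<lfloor>x\<rfloor>))" by (rule harm_le_ln[OF K])
      also have "\<dots> \<le> 1 + ln x" using K x by simp
      finally show "harm (nat \<lfloor>x\<rfloor>) \<le> 1 + ln x" .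
    qed simp
    finally show "(\<Sum>y\<in>{y. real (?w y) \<le> x}. 1 / real (?w y) ^ ?d) \<le> ?B * (1 + ln x)" .
  qed
  have eqJ: "{js :: (int^'d) list. length js = p \<and> prod_list (map lnorm js) \<le> int N} = LS ?w p (real N)"
  proof -
    have nn: "\<forall>x::int^'d. 0 \<le> lnorm x"
    proof
      fix x :: "int^'d" show "0 \<le> lnorm x" using lnorm_ge1[of x] by simp
    qed
    have "prod_list (map lnorm js) = int (prod_list (map ?w js))" for js :: "(int^'d) list"
      using int_prod_list_nat[of lnorm js, OF nn] by simp
    thus ?thesis unfolding LS_def by (metis (mono_tags, lifting) of_int_of_nat_eq of_int_le_iff of_nat_le_iff of_int_of_nat_eq)
  qed
  show ?thesis unfolding eqJ
    using LS_finite[OF w1 fin] LS_bound[OF w1 fin _ hB hS, of p "real N"] assms by simp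
qed



definition A1 :: "nat \<Rightarrow> int set" where "A1 K = {v. 1 + \<bar>v\<bar> \<le> int K}"

lemma A1_eq: "A1 K = {-(int K - 1)..int K - 1}"
  by (auto simp: A1_def)

lemma finite_A1: "finite (A1 K)" by (simp add: A1_eq)

lemma card_A1: "K \<ge> 1 \<Longrightarrow> card (A1 K) = 2 * K - 1"
  by (simp add: A1_eq) 

lemma sum_A1: "K \<ge> 1 \<Longrightarrow> (\<Sum>v\<in>A1 K. 1 / (1 + real_of_int \<bar>v\<bar>)) \<le> 2 * harm K"
proof (induction K rule: nat_induct_at_least)
  case base
  have "A1 1 = {0}" by (auto simp: A1_def)
  thus ?case by (simp add: harm_def)
next
  case (Suc K)
  have split: "A1 (Suc K) = insert (int K) (insert (- int K) (A1 K))"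
    by (auto simp: A1_def)
  have "int K \<notin> A1 K" "- int K \<notin> A1 K" "int K \<noteq> - int K" using Suc.hyps by (auto simp: A1_def)
  hence "(\<Sum>v\<in>A1 (Suc K). 1 / (1 + real_of_int \<bar>v\<bar>)) = 2 / (1 + real K) + (\<Sum>v\<in>A1 K. 1 / (1 + real_of_int \<bar>v\<bar>))"
    unfolding split using finite_A1[of K] by simp
  also have "\<dots> \<le> 2 / (1 + real K) + 2 * harm K" using Suc.IH by simp
  also have "\<dots> = 2 * harm (Suc K)" by (simp add: harm_Suc field_simps)
  finally show ?case .
qed

lemma LS2_bound:
  fixes r :: nat and x :: real
  assumes "r \<ge> 1" "x \<ge> 1"
  shows "finite (LS (\<lambda>v::int. nat (1 + \<bar>v\<bar>)) r x) \<and>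
    real (card (LS (\<lambda>v::int. nat (1 + \<bar>v\<bar>)) r x)) \<le> 2 ^ r * x ^ 1 * (1 + ln x) ^ (r - 1)"
proof -
  let ?w = "\<lambda>v::int. nat (1 + \<bar>v\<bar>)"
  have w1: "\<forall>y. ?w y \<ge> 1" by auto
  have fin: "\<forall>n. finite {y. ?w y \<le> n}"
  proof
    fix n :: nat
    have "{y. ?w y \<le> n} \<subseteq> {-int n..int n}" by auto
    thus "finite {y. ?w y \<le> n}" using finite_subset by blast
  qed
  have Aset: "{y. real (?w y) \<le> x} = A1 (nat \<lfloor>x\<rfloor>)" if "x \<ge> 1" for x
    using that by (auto simp: A1_def) linarith+
  have hB: "\<forall>x\<ge>1. real (card {y. real (?w y) \<le> x}) \<le> 2 * x ^ 1"
  proof (intro allI impI)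
    fix x :: real assume x: "x \<ge> 1"
    have K: "nat \<lfloor>x\<rfloor> \<ge> 1" using x by linarith
    have "real (card {y. real (?w y) \<le> x}) = real (2 * nat \<lfloor>x\<rfloor> - 1)"
      using Aset[OF x] card_A1[OF K] by simp
    also have "\<dots> \<le> 2 * x" using K x by (simp add: of_nat_diff) linarith
    finally show "real (card {y. real (?w y) \<le> x}) \<le> 2 * x ^ 1" by simp
  qed
  have hS: "\<forall>x\<ge>1. (\<Sum>y\<in>{y. real (?w y) \<le> x}. 1 / real (?w y) ^ 1) \<le> 2 * (1 + ln x)"
  proof (intro allI impI)
    fix x :: real assume x: "x \<ge> 1"
    have K: "nat \<lfloor>x\<rfloor> \<ge> 1" using x by linarith
    have rw: "real (?w v) = 1 + real_of_int \<bar>v\<bar>" for v by simp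
    have "(\<Sum>y\<in>{y. real (?w y) \<le> x}. 1 / real (?w y) ^ 1)
        = (\<Sum>v\<in>A1 (nat \<lfloor>x\<rfloor>). 1 / (1 + real_of_int \<bar>v\<bar>))"
      by (subst Aset[OF x]) (simp only: rw power_one_right)
    also have "\<dots> \<le> 2 * harm (nat \<lfloor>x\<rfloor>)" by (rule sum_A1[OF K])
    also have "\<dots> \<le> 2 * (1 + ln x)"
    proof -
      have "harm (nat \<lfloor>x\<rfloor>) \<le> 1 + ln (real (nat \<lfloor>x\<rfloor>))" by (rule harm_le_ln[OF K])
      also have "\<dots> \<le> 1 + ln x" using K x by simp
      finally show ?thesis by simp
    qed
    finally show "(\<Sum>y\<in>{y. real (?w y) \<le> x}. 1 / real (?w y) ^ 1) \<le> 2 * (1 + ln x)" .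
  qed
  show ?thesis
    using LS_finite[OF w1 fin] LS_bound[OF w1 fin _ hB hS, of r x] assms by simp
qed



lemma J2_bound:
  fixes N :: nat and p :: nat
  assumes "p \<ge> 1" "N \<ge> 1"
  shows "finite {js :: (int^'d) list. length js = p \<and> prod_list (map ssize js) \<le> int N}
    \<and> real (card {js :: (int^'d) list. length js = p \<and> prod_list (map ssize js) \<le> int N})
      \<le> 2 ^ (CARD('d) * p) * real N * (1 + ln (real N)) ^ (CARD('d) * p - 1)"
proof -
  let ?d = "CARD('d)"
  let ?w = "\<lambda>v::int. nat (1 + \<bar>v\<bar>)"
  let ?J = "{js :: (int^'d) list. length js = p \<and> prod_list (map ssize js) \<le> int N}"
  obtain es :: "'d list" where es: "distinct es" "set es = UNIV"
    using finite_distinct_list[of "UNIV :: 'd set"] by auto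
  define v2l where "v2l = (\<lambda>j::int^'d. map (\<lambda>n. j $ n) es)"
  define cc where "cc = (\<lambda>js. concat (map v2l js))"
  have lenv: "length (v2l j) = ?d" for j
    using es distinct_card[OF es(1)] by (simp add: v2l_def)
  have prodv: "int (prod_list (map ?w (v2l j))) = ssize j" for j
  proof -
    have "int (prod_list (map ?w (v2l j))) = prod_list (map (\<lambda>v. 1 + \<bar>v\<bar>) (v2l j))"
      by (rule int_prod_list_nat) auto
    also have "\<dots> = prod_list (map (\<lambda>n. 1 + \<bar>j $ n\<bar>) es)" by (simp add: v2l_def o_def)
    also have "\<dots> = (\<Prod>n\<in>set es. 1 + \<bar>j $ n\<bar>)" using es(1) by (simp add: prod.distinct_set_conv_list)
    also have "\<dots> = ssize j" using es(2) by (simp add: ssize_def)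
    finally show ?thesis .
  qed
  have prodc: "int (prod_list (map ?w (cc js))) = prod_list (map ssize js)" for js
  proof (induction js)
    case (Cons j js)
    have "int (prod_list (map ?w (cc (j # js)))) = int (prod_list (map ?w (v2l j))) * int (prod_list (map ?w (cc js)))"
      by (simp add: cc_def)
    thus ?case using Cons prodv by simp
  qed (simp add: cc_def)
  have lenc: "length (cc js) = ?d * length js" for js
    by (induction js) (auto simp: cc_def lenv)
  have injv: "v2l a = v2l b \<Longrightarrow> a = b" for a b
    using es(2) by (auto simp: v2l_def vec_eq_iff)
  have injc: "length a = length b \<Longrightarrow> cc a = cc b \<Longrightarrow> a = b" for a b
  proof (induction a arbitrary: b)
    case Nil thus ?case by simp
  next
    case (Cons x a)
    then obtain y b' where b: "b = y # b'" by (cases b) auto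
    have "v2l x @ cc a = v2l y @ cc b'" using Cons.prems b by (simp add: cc_def)
    hence "v2l x = v2l y \<and> cc a = cc b'" using lenv by (simp add: append_eq_append_conv)
    thus ?case using Cons b injv by auto
  qed
  have inj: "inj_on cc ?J" using injc by (auto simp: inj_on_def)
  have sub: "cc ` ?J \<subseteq> LS ?w (?d * p) (real N)"
  proof
    fix zs assume "zs \<in> cc ` ?J"
    then obtain js where js: "js \<in> ?J" "zs = cc js" by blast
    have "int (prod_list (map ?w zs)) \<le> int N" using js prodc by simp
    hence "real (prod_list (map ?w zs)) \<le> real N" by linarith
    thus "zs \<in> LS ?w (?d * p) (real N)" using js lenc by (simp add: LS_def)
  qed
  have dp: "?d * p \<ge> 1" using assms(1) by (simp add: Suc_le_eq)
  have L: "finite (LS ?w (?d * p) (real N)) \<and>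
    real (card (LS ?w (?d * p) (real N))) \<le> 2 ^ (?d * p) * real N ^ 1 * (1 + ln (real N)) ^ (?d * p - 1)"
    using LS2_bound[OF dp, of "real N"] assms by simp
  have finJ: "finite ?J" using finite_subset[OF sub] L inj finite_imageD by blast
  have "card ?J = card (cc ` ?J)" using inj by (simp add: card_image)
  also have "\<dots> \<le> card (LS ?w (?d * p) (real N))" using sub L by (intro card_mono) auto
  finally have "real (card ?J) \<le> real (card (LS ?w (?d * p) (real N)))" by linarith
  thus ?thesis using L finJ by simp
qed



lemma ln_ge_half: "(N::nat) \<ge> 2 \<Longrightarrow> 1 + ln (real N) \<le> 3 * ln (real N)"
proof -
  assume N: "N \<ge> 2"
  have "ln (1/2::real) \<le> 1/2 - 1" by (rule ln_le_minus_one) simp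
  hence "ln (2::real) \<ge> 1/2" by (simp add: ln_div)
  moreover have "ln (2::real) \<le> ln (real N)" using N by simp
  ultimately show ?thesis by linarith
qed

lemma pow_log_le: "(N::nat) \<ge> 2 \<Longrightarrow> (1 + ln (real N)) ^ k \<le> 3 ^ k * ln (real N) ^ k"
proof -
  assume N: "N \<ge> 2"
  have "(1 + ln (real N)) ^ k \<le> (3 * ln (real N)) ^ k"
    using ln_ge_half[OF N] N by (intro power_mono) (auto intro: add_nonneg_nonneg)
  thus ?thesis by (simp add: power_mult_distrib)
qed

lemma S_card:
  fixes S :: "((int^'d) \<times> (int^'d) list) set" and J :: "(int^'d) list set"
  assumes "finite J"
    and "\<And>l js. (l, js) \<in> S \<Longrightarrow> js \<in> J \<and> l - sum_list js \<in> bx q"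
  shows "finite S \<and> card S \<le> card J * (2*q+1) ^ CARD('d)"
proof -
  let ?f = "\<lambda>(js, m). (sum_list js + m, js)"
  have sub: "S \<subseteq> ?f ` (J \<times> bx q)"
  proof
    fix z assume z: "z \<in> S"
    obtain l js where lz: "z = (l, js)" by (cases z)
    have "(js, l - sum_list js) \<in> J \<times> bx q" using assms(2) z lz by auto
    moreover have "z = ?f (js, l - sum_list js)" using lz by simp
    ultimately show "z \<in> ?f ` (J \<times> bx q)" by blast
  qed
  have fin: "finite (J \<times> (bx q :: (int^'d) set))" using assms(1) finite_bx[where 'd='d] by blast
  have "card S \<le> card (?f ` (J \<times> bx q))" using sub fin by (intro card_mono) auto
  also have "\<dots> \<le> card (J \<times> (bx q :: (int^'d) set))" by (rule card_image_le[OF fin])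
  also have "\<dots> = card J * (2*q+1) ^ CARD('d)" by (simp add: card_cartesian_product card_bx')
  finally show ?thesis using sub fin finite_subset by blast
qed

theorem lemma4p2:
  fixes p q :: nat
  assumes "p \<ge> 1"
  shows "\<exists>C::real. \<forall>(a :: int ^ 'd \<Rightarrow> (int ^ 'd) list \<Rightarrow> complex) (M::enat) (N::nat).
    (\<forall>l js. length js = p \<longrightarrow> (\<exists>n. \<bar>momentum l js $ n\<bar> > int q) \<longrightarrow> a l js = 0) \<longrightarrow>
    N \<ge> 2 \<longrightarrow>
    (let S1 = {(l, js). length js = p \<and> l \<in> KM M \<and> (\<forall>j\<in>set js. j \<in> KM M) \<and>
                 prod_list (map lnorm js) \<le> int N \<and> a l js \<noteq> 0};
         S2 = {(l, js). length js = p \<and> l \<in> KMstar M \<and> (\<forall>j\<in>set js. j \<in> KMstar M) \<and>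
                 prod_list (map ssize js) \<le> int N \<and> a l js \<noteq> 0}
     in finite S1 \<and> real (card S1) \<le> C * real N ^ CARD('d) * ln (real N) ^ (p - 1) \<and>
        finite S2 \<and> real (card S2) \<le> C * real N * ln (real N) ^ (CARD('d) * p - 1))"
proof -
  let ?d = "CARD('d)"
  let ?Q = "real ((2*q+1) ^ ?d)"
  define C1 where "C1 = ?Q * (2 * real ?d * 3 ^ ?d) ^ p * 3 ^ (p - 1)"
  define C2 where "C2 = ?Q * 2 ^ (?d * p) * 3 ^ (?d * p - 1)"
  have C1: "C1 \<ge> 0" and C2: "C2 \<ge> 0" by (auto simp: C1_def C2_def)
  show ?thesis
  proof (rule exI[of _ "C1 + C2"], intro allI impI)
    fix a :: "int ^ 'd \<Rightarrow> (int ^ 'd) list \<Rightarrow> complex" and M :: enat and N :: nat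
    assume ha: "\<forall>l js. length js = p \<longrightarrow> (\<exists>n. \<bar>momentum l js $ n\<bar> > int q) \<longrightarrow> a l js = 0"
      and N: "N \<ge> 2"
    have N1: "N \<ge> 1" using N by simp
    have lnN: "ln (real N) \<ge> 0" using N by simp
    define S1 where "S1 = {(l, js). length js = p \<and> l \<in> KM M \<and> (\<forall>j\<in>set js. j \<in> KM M) \<and>
                 prod_list (map lnorm js) \<le> int N \<and> a l js \<noteq> 0}"
    define S2 where "S2 = {(l, js). length js = p \<and> l \<in> KMstar M \<and> (\<forall>j\<in>set js. j \<in> KMstar M) \<and>
                 prod_list (map ssize js) \<le> int N \<and> a l js \<noteq> 0}"
    define J1 where "J1 = {js :: (int^'d) list. length js = p \<and> prod_list (map lnorm js) \<le> int N}"
    define J2 where "J2 = {js :: (int^'d) list. length js = p \<and> prod_list (map ssize js) \<le> int N}"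
    have mom: "l - sum_list js \<in> bx q" if "length js = p" "a l js \<noteq> 0" for l js
    proof -
      have "\<not> (\<exists>n. \<bar>momentum l js $ n\<bar> > int q)" using ha that by blast
      thus ?thesis by (auto simp: bx_def momentum_def not_less)
    qed
    note hJ1 = J1_bound[OF assms N1, where 'd='d]
    note hJ2 = J2_bound[OF assms N1, where 'd='d]
    have s1: "finite S1 \<and> card S1 \<le> card J1 * (2*q+1) ^ ?d"
      using hJ1 mom by (intro S_card) (auto simp: S1_def J1_def)
    have s2: "finite S2 \<and> card S2 \<le> card J2 * (2*q+1) ^ ?d"
      using hJ2 mom by (intro S_card) (auto simp: S2_def J2_def)
    have b1: "real (card S1) \<le> (C1 + C2) * real N ^ ?d * ln (real N) ^ (p - 1)"
    proof -
      have "real (card S1) \<le> real (card J1) * ?Q" using s1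
        by (metis of_nat_le_iff of_nat_mult)
      also have "\<dots> \<le> ((2 * real ?d * 3 ^ ?d) ^ p * real N ^ ?d * (1 + ln (real N)) ^ (p - 1)) * ?Q"
        using hJ1 by (intro mult_right_mono) (auto simp: J1_def)
      also have "\<dots> \<le> ((2 * real ?d * 3 ^ ?d) ^ p * real N ^ ?d * (3 ^ (p - 1) * ln (real N) ^ (p - 1))) * ?Q"
        using pow_log_le[OF N] by (intro mult_right_mono mult_left_mono) auto
      also have "\<dots> = C1 * real N ^ ?d * ln (real N) ^ (p - 1)" by (simp add: C1_def algebra_simps)
      also have "\<dots> \<le> (C1 + C2) * real N ^ ?d * ln (real N) ^ (p - 1)"
        using C2 lnN by (intro mult_right_mono) auto
      finally show ?thesis .
    qed
    have b2: "real (card S2) \<le> (C1 + C2) * real N * ln (real N) ^ (?d * p - 1)"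
    proof -
      have "real (card S2) \<le> real (card J2) * ?Q" using s2
        by (metis of_nat_le_iff of_nat_mult)
      also have "\<dots> \<le> (2 ^ (?d * p) * real N * (1 + ln (real N)) ^ (?d * p - 1)) * ?Q"
        using hJ2 by (intro mult_right_mono) (auto simp: J2_def)
      also have "\<dots> \<le> (2 ^ (?d * p) * real N * (3 ^ (?d * p - 1) * ln (real N) ^ (?d * p - 1))) * ?Q"
        using pow_log_le[OF N] by (intro mult_right_mono mult_left_mono) auto
      also have "\<dots> = C2 * real N * ln (real N) ^ (?d * p - 1)" by (simp add: C2_def algebra_simps)
      also have "\<dots> \<le> (C1 + C2) * real N * ln (real N) ^ (?d * p - 1)"
        using C1 lnN by (intro mult_right_mono) auto
      finally show ?thesis .
    qed
    show "let S1 = {(l, js). length js = p \<and> l \<in> KM M \<and> (\<forall>j\<in>set js. j \<in> KM M) \<and>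
                 prod_list (map lnorm js) \<le> int N \<and> a l js \<noteq> 0};
         S2 = {(l, js). length js = p \<and> l \<in> KMstar M \<and> (\<forall>j\<in>set js. j \<in> KMstar M) \<and>
                 prod_list (map ssize js) \<le> int N \<and> a l js \<noteq> 0}
     in finite S1 \<and> real (card S1) \<le> (C1 + C2) * real N ^ CARD('d) * ln (real N) ^ (p - 1) \<and>
        finite S2 \<and> real (card S2) \<le> (C1 + C2) * real N * ln (real N) ^ (CARD('d) * p - 1)"
      unfolding Let_def S1_def[symmetric] S2_def[symmetric] using s1 s2 b1 b2 by blast
  qed
qed

end
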